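(* Let $X_0$ and $X_1$ be mm-spaces with $X_0\prec X_1$, and let $f\colon X_1\to X_0$ be a 1-Lipschitz map with $f_*\mu_{X_1}=\mu_{X_0}$. For $0<t<1$ define a metric on $X_1$ by $d_{X_t}(x,x'):=(1-t)\,d_{X_0}(f(x),f(x'))+t\,d_{X_1}(x,x')$ and the mm-space $X_t:=(X_1,d_{X_t},\mu_{X_1})$. Then $[0,1]\ni t\mapsto X_t$ is a $\square$-continuous path from $X_0$ to $X_1$, and it is monotone with respect to the Lipschitz order: $X_s\prec X_t$ for all $0\le s\le t\le1$.
   Context: An mm-space is a triple $(X,d_X,\mu_X)$ where $(X,d_X)$ is a complete separable metric space and $\mu_X$ a Borel probability measure, considered up to mm-isomorphism (an isometry between the supports of the measures pushing one measure to the other). A parameter of $X$ is a Borel map $\varphi\colon [0,1)\to X$ with $\varphi_*\mathcal{L}^1=\mu_X$. The box distance $\square(X,Y)$ is the infimum of $\varepsilon\ge 0$ such that there exist parameters $\varphi$ of $X$, $\psi$ of $Y$ and a Borel set $I_0\subset[0,1)$ with $\mathcal{L}^1(I_0)\ge 1-\varepsilon$ and $|d_X(\varphi(s),\varphi(t))-d_Y(\psi(s),\psi(t))|\le\varepsilon$ for all $s,t\in I_0$. Lipschitz order: $Y\prec X$ if there exists a 1-Lipschitz map $g\colon X\to Y$ with $g_*\mu_X=\mu_Y$. *)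

theory Defs
  imports "HOL-Analysis.Analysis" "HOL-Probability.Probability"
begin

text \<open>An mm-space is represented by a distance function together with a Borel probability
measure; the underlying set is the space of the measure.\<close>

type_synonym 'a mm = "('a \<Rightarrow> 'a \<Rightarrow> real) \<times> 'a measure"

definition mm_space :: "'a mm \<Rightarrow> bool" where
  "mm_space X \<longleftrightarrow>
     (let d = fst X; \<mu> = snd X; M = space \<mu> in
       Metric_space M d \<and> Metric_space.mcomplete M d \<and>
       separable_space (Metric_space.mtopology M d) \<and>
       sets \<mu> = sigma_sets M {U. openin (Metric_space.mtopology M d) U} \<and>
       prob_space \<mu>)"

definition unit_lebesgue :: "real measure" where
  "unit_lebesgue = restrict_space lborel {0..<1}"

definition parameter :: "'a mm \<Rightarrow> (real \<Rightarrow> 'a) \<Rightarrow> bool" where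
  "parameter X \<phi> \<longleftrightarrow> \<phi> \<in> measurable unit_lebesgue (snd X) \<and> distr unit_lebesgue (snd X) \<phi> = snd X"

definition box_dist :: "'a mm \<Rightarrow> 'b mm \<Rightarrow> real" where
  "box_dist X Y = Inf {\<epsilon>. \<epsilon> \<ge> 0 \<and> (\<exists>\<phi> \<psi> I0. parameter X \<phi> \<and> parameter Y \<psi> \<and>
       I0 \<in> sets unit_lebesgue \<and> measure unit_lebesgue I0 \<ge> 1 - \<epsilon> \<and>
       (\<forall>s\<in>I0. \<forall>t\<in>I0. \<bar>fst X (\<phi> s) (\<phi> t) - fst Y (\<psi> s) (\<psi> t)\<bar> \<le> \<epsilon>))}"

definition lip1 :: "'a mm \<Rightarrow> 'b mm \<Rightarrow> ('a \<Rightarrow> 'b) \<Rightarrow> bool" where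
  "lip1 X Y g \<longleftrightarrow> g \<in> space (snd X) \<rightarrow> space (snd Y) \<and>
     (\<forall>x\<in>space (snd X). \<forall>x'\<in>space (snd X). fst Y (g x) (g x') \<le> fst X x x')"

definition lip_dominated :: "'b mm \<Rightarrow> 'a mm \<Rightarrow> bool" (infix "\<prec>" 50) where
  "Y \<prec> X \<longleftrightarrow> (\<exists>g. lip1 X Y g \<and> g \<in> measurable (snd X) (snd Y) \<and> distr (snd X) (snd Y) g = snd Y)"

definition interp :: "'a mm \<Rightarrow> 'b mm \<Rightarrow> ('b \<Rightarrow> 'a) \<Rightarrow> real \<Rightarrow> 'b mm" where
  "interp X0 X1 f t = ((\<lambda>x x'. (1 - t) * fst X0 (f x) (f x') + t * fst X1 x x'), snd X1)"

end

theory Submission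
  imports Defs
begin


locale param_constr = Metric_space M d + P: prob_space \<mu> for M :: "'a set" and d and \<mu> :: "'a measure" +
  fixes D :: "nat \<Rightarrow> 'a"
  assumes space_eq: "space \<mu> = M"
    and sets_eq: "sets \<mu> = sigma_sets M {U. openin mtopology U}"
    and complete: "mcomplete"
    and D_in: "\<And>j. D j \<in> M"
    and D_dense: "\<And>x e. x \<in> M \<Longrightarrow> 0 < e \<Longrightarrow> \<exists>j. d x (D j) < e"
begin

definition idx :: "nat \<Rightarrow> 'a \<Rightarrow> nat" where
  "idx i x = (LEAST j. d x (D j) < 1 / 2 ^ Suc i)"

definition addr :: "'a \<Rightarrow> nat \<Rightarrow> nat list" where
  "addr x n = map (\<lambda>i. idx i x) [0..<n]"

definition C :: "nat list \<Rightarrow> 'a set" where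
  "C \<tau> = {x \<in> M. addr x (length \<tau>) = \<tau>}"

definition mc :: "nat list \<Rightarrow> real" where
  "mc \<tau> = measure \<mu> (C \<tau>)"

lemma open_sets: "openin mtopology U \<Longrightarrow> U \<in> sets \<mu>"
  unfolding sets_eq by (rule sigma_sets.Basic) simp

lemma idx_lt: "x \<in> M \<Longrightarrow> d x (D (idx i x)) < 1 / 2 ^ Suc i"
  unfolding idx_def
  by (rule LeastI_ex) (use D_dense[of x "1 / 2 ^ Suc i"] in auto)

lemma idx_eq_iff: "idx i x = j \<longleftrightarrow> d x (D j) < 1 / 2 ^ Suc i \<and> (\<forall>j'<j. \<not> d x (D j') < 1 / 2 ^ Suc i)"
  if "x \<in> M"
proof
  assume "idx i x = j"
  then show "d x (D j) < 1 / 2 ^ Suc i \<and> (\<forall>j'<j. \<not> d x (D j') < 1 / 2 ^ Suc i)"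
    using idx_lt[OF that, of i] not_less_Least unfolding idx_def by blast
next
  assume "d x (D j) < 1 / 2 ^ Suc i \<and> (\<forall>j'<j. \<not> d x (D j') < 1 / 2 ^ Suc i)"
  then show "idx i x = j" unfolding idx_def
    by (intro Least_equality) (auto simp: not_less[symmetric])
qed


lemma mball_sets: "{x \<in> M. d x (D j') < r} \<in> sets \<mu>"
proof -
  have "{x \<in> M. d x (D j') < r} = mball (D j') r"
    using D_in by (auto simp: commute)
  then show ?thesis using open_sets openin_mball by simp
qed

lemma idx_sets: "{x \<in> M. idx i x = j} \<in> sets \<mu>"
proof -
  have "{x \<in> M. idx i x = j} = {x \<in> M. d x (D j) < 1 / 2 ^ Suc i} -
      (\<Union>j'\<in>{..<j}. {x \<in> M. d x (D j') < 1 / 2 ^ Suc i})"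
  proof (rule set_eqI)
    fix x show "x \<in> {x \<in> M. idx i x = j} \<longleftrightarrow> x \<in> {x \<in> M. d x (D j) < 1 / 2 ^ Suc i} -
      (\<Union>j'\<in>{..<j}. {x \<in> M. d x (D j') < 1 / 2 ^ Suc i})"
      by (cases "x \<in> M") (auto simp: idx_eq_iff)
  qed
  also have "\<dots> \<in> sets \<mu>"
    using mball_sets by (intro sets.Diff sets.finite_UN) auto
  finally show ?thesis .
qed


lemma length_addr[simp]: "length (addr x n) = n"
  by (simp add: addr_def)

lemma addr_Suc: "addr x (Suc n) = addr x n @ [idx n x]"
  by (simp add: addr_def)

lemma addr_take: "m \<le> n \<Longrightarrow> addr x m = take m (addr x n)"
  by (simp add: addr_def take_map min_def)

lemma C_Nil[simp]: "C [] = M"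
  by (simp add: C_def addr_def)

lemma C_snoc: "C (\<tau> @ [j]) = C \<tau> \<inter> {x \<in> M. idx (length \<tau>) x = j}"
  unfolding C_def by (auto simp: addr_Suc)

lemma C_sets: "C \<tau> \<in> sets \<mu>"
proof (induction \<tau> rule: rev_induct)
  case Nil
  then show ?case using space_eq sets.top[of \<mu>] by simp
next
  case (snoc j \<tau>)
  then show ?case unfolding C_snoc using idx_sets by (rule sets.Int)
qed

lemma C_take: "m \<le> length \<tau> \<Longrightarrow> C \<tau> \<subseteq> C (take m \<tau>)"
proof
  fix x assume m: "m \<le> length \<tau>" and x: "x \<in> C \<tau>"
  then have "addr x (length \<tau>) = \<tau>" "x \<in> M" by (auto simp: C_def)
  moreover have "addr x m = take m (addr x (length \<tau>))" by (rule addr_take[OF m])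
  ultimately show "x \<in> C (take m \<tau>)" using m by (simp add: C_def min_def)
qed

lemma C_sub: "C \<tau> \<subseteq> M"
  by (auto simp: C_def)

lemma C_diam:
  assumes "x \<in> C \<tau>" "y \<in> C \<tau>" "length \<tau> = Suc k"
  shows "d x y < 2 / 2 ^ Suc k"
proof -
  have ax: "addr x (Suc k) = \<tau>" and ay: "addr y (Suc k) = \<tau>" and xy: "x \<in> M" "y \<in> M"
    using assms by (auto simp: C_def)
  have "addr x (Suc k) ! k = idx k x" "addr y (Suc k) ! k = idx k y"
    by (simp_all add: addr_def del: upt_Suc)
  then have "idx k x = \<tau> ! k" "idx k y = \<tau> ! k"
    using ax ay by auto
  then have "d x (D (\<tau>!k)) < 1 / 2 ^ Suc k" "d y (D (\<tau>!k)) < 1 / 2 ^ Suc k"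
    using idx_lt xy by metis+
  moreover have "d x y \<le> d x (D (\<tau>!k)) + d y (D (\<tau>!k))"
    using triangle[of x "D (\<tau>!k)" y] xy D_in commute[of y] by simp
  ultimately show ?thesis by simp
qed

lemma children_disj: "disjoint_family (\<lambda>j. C (\<tau> @ [j]))"
  unfolding disjoint_family_on_def C_snoc by auto

lemma children_Un: "(\<Union>j. C (\<tau> @ [j])) = C \<tau>"
  unfolding C_snoc using C_sub by auto

lemma mc_sums: "(\<lambda>j. mc (\<tau> @ [j])) sums mc \<tau>"
proof -
  have "range (\<lambda>j. C (\<tau> @ [j])) \<subseteq> sets \<mu>" using C_sets by auto
  from P.finite_measure_UNION[OF this children_disj]
  show ?thesis unfolding mc_def children_Un .
qed

lemma mc_nonneg: "0 \<le> mc \<tau>"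
  by (simp add: mc_def)

lemma mc_Nil: "mc [] = 1"
  using P.prob_space space_eq by (simp add: mc_def)

lemma mc_partial: "(\<Sum>j'<n. mc (\<tau> @ [j'])) \<le> mc \<tau>"
proof -
  have "summable (\<lambda>j. mc (\<tau> @ [j]))" "suminf (\<lambda>j. mc (\<tau> @ [j])) = mc \<tau>"
    using mc_sums[of \<tau>] by (auto simp: sums_iff)
  then show ?thesis using sum_le_suminf[of "\<lambda>j. mc (\<tau> @ [j])" "{..<n}"] mc_nonneg by auto
qed


definition a :: "nat list \<Rightarrow> real" where
  "a \<tau> = (\<Sum>i<length \<tau>. \<Sum>j<\<tau>!i. mc (take i \<tau> @ [j]))"

lemma a_Nil[simp]: "a [] = 0"
  by (simp add: a_def)

lemma a_snoc: "a (\<tau> @ [j]) = a \<tau> + (\<Sum>j'<j. mc (\<tau> @ [j']))"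
proof -
  have "a (\<tau> @ [j]) = (\<Sum>i<length \<tau>. \<Sum>j'<(\<tau>@[j])!i. mc (take i (\<tau>@[j]) @ [j'])) +
      (\<Sum>j'<(\<tau>@[j])!length \<tau>. mc (take (length \<tau>) (\<tau>@[j]) @ [j']))"
    by (simp add: a_def del: nth_append_length)
  also have "(\<Sum>i<length \<tau>. \<Sum>j'<(\<tau>@[j])!i. mc (take i (\<tau>@[j]) @ [j'])) = a \<tau>"
    unfolding a_def by (intro sum.cong refl) (simp_all add: nth_append take_append)
  finally show ?thesis by simp
qed

lemma a_nonneg: "0 \<le> a \<tau>"
  unfolding a_def by (intro sum_nonneg) (simp add: mc_nonneg)

lemma S_mono: "m \<le> n \<Longrightarrow> (\<Sum>j'<m. mc (\<tau> @ [j'])) \<le> (\<Sum>j'<n. mc (\<tau> @ [j']))"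
  by (rule sum_mono2) (auto simp: mc_nonneg)

lemma a_bound: "a \<tau> + mc \<tau> \<le> 1"
proof (induction \<tau> rule: rev_induct)
  case Nil
  then show ?case by (simp add: mc_Nil)
next
  case (snoc j \<tau>)
  have "a (\<tau> @ [j]) + mc (\<tau> @ [j]) = a \<tau> + (\<Sum>j'<Suc j. mc (\<tau> @ [j']))"
    by (simp add: a_snoc)
  also have "\<dots> \<le> a \<tau> + mc \<tau>" using mc_partial[where n="Suc j" and \<tau>=\<tau>] by simp
  finally show ?case using snoc by simp
qed

primrec pre :: "real \<Rightarrow> nat \<Rightarrow> nat list" where
  "pre s 0 = []"
| "pre s (Suc n) = pre s n @ [LEAST j. s < a (pre s n) + (\<Sum>j'<Suc j. mc (pre s n @ [j']))]"

lemma length_pre[simp]: "length (pre s n) = n"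
  by (induction n) auto

lemma least_char:
  assumes "a \<tau> \<le> s" "s < a \<tau> + mc \<tau>"
  shows "(LEAST j. s < a \<tau> + (\<Sum>j'<Suc j. mc (\<tau> @ [j']))) = j \<longleftrightarrow>
    a \<tau> + (\<Sum>j'<j. mc (\<tau> @ [j'])) \<le> s \<and> s < a \<tau> + (\<Sum>j'<Suc j. mc (\<tau> @ [j']))"
proof -
  define S where "S n = (\<Sum>j'<n. mc (\<tau> @ [j']))" for n
  have Smono: "m \<le> n \<Longrightarrow> S m \<le> S n" for m n unfolding S_def by (rule S_mono)
  have "S \<longlonglongrightarrow> mc \<tau>" using mc_sums[of \<tau>] unfolding S_def sums_def .
  moreover have "s - a \<tau> < mc \<tau>" using assms by simp
  ultimately have "eventually (\<lambda>n. s - a \<tau> < S n) sequentially"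
    by (rule order_tendstoD)
  then obtain n where n: "s - a \<tau> < S n" by (auto simp: eventually_sequentially)
  have ex: "s < a \<tau> + S (Suc n)" using n Smono[of n "Suc n"] by simp
  let ?P = "\<lambda>j. s < a \<tau> + S (Suc j)"
  have "(LEAST j. ?P j) = j \<longleftrightarrow> a \<tau> + S j \<le> s \<and> ?P j"
  proof
    assume L: "(LEAST j. ?P j) = j"
    have Pj: "?P j" using LeastI[of ?P n, OF ex] L by simp
    moreover have "a \<tau> + S j \<le> s"
    proof (cases j)
      case 0 then show ?thesis using assms by (simp add: S_def)
    next
      case (Suc k)
      have "\<not> ?P k" using not_less_Least[of k ?P] L Suc by simp
      then show ?thesis using Suc by simp
    qed
    ultimately show "a \<tau> + S j \<le> s \<and> ?P j" by simp
  next
    assume R: "a \<tau> + S j \<le> s \<and> ?P j"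
    show "(LEAST j. ?P j) = j"
    proof (rule Least_equality)
      show "?P j" using R by simp
      fix k assume "?P k"
      show "j \<le> k"
      proof (rule ccontr)
        assume "\<not> j \<le> k"
        then have "S (Suc k) \<le> S j" by (intro Smono) simp
        then show False using R \<open>?P k\<close> by simp
      qed
    qed
  qed
  then show ?thesis unfolding S_def .
qed

lemma pre_iff:
  assumes s: "s \<in> {0..<1}"
  shows "pre s n = \<tau> \<longleftrightarrow> length \<tau> = n \<and> a \<tau> \<le> s \<and> s < a \<tau> + mc \<tau>"
proof (induction n arbitrary: \<tau>)
  case 0
  then show ?case using s by (auto simp: mc_Nil)
next
  case (Suc n)
  show ?case
  proof
    assume pre: "pre s (Suc n) = \<tau>"
    define \<sigma> where "\<sigma> = pre s n"
    have IH: "a \<sigma> \<le> s" "s < a \<sigma> + mc \<sigma>" using Suc[of \<sigma>] by (auto simp: \<sigma>_def)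
    define j where "j = (LEAST j. s < a \<sigma> + (\<Sum>j'<Suc j. mc (\<sigma> @ [j'])))"
    have \<tau>: "\<tau> = \<sigma> @ [j]" using pre by (simp add: \<sigma>_def j_def)
    have "a \<sigma> + (\<Sum>j'<j. mc (\<sigma> @ [j'])) \<le> s \<and> s < a \<sigma> + (\<Sum>j'<Suc j. mc (\<sigma> @ [j']))"
      using least_char[OF IH, of j] by (simp add: j_def)
    then show "length \<tau> = Suc n \<and> a \<tau> \<le> s \<and> s < a \<tau> + mc \<tau>"
      using \<tau> by (simp add: a_snoc \<sigma>_def)
  next
    assume R: "length \<tau> = Suc n \<and> a \<tau> \<le> s \<and> s < a \<tau> + mc \<tau>"
    then obtain \<sigma> j where \<tau>: "\<tau> = \<sigma> @ [j]" by (metis length_Suc_conv_rev)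
    have len: "length \<sigma> = n" using R \<tau> by simp
    have b: "a \<sigma> + (\<Sum>j'<j. mc (\<sigma> @ [j'])) \<le> s" "s < a \<sigma> + (\<Sum>j'<Suc j. mc (\<sigma> @ [j']))"
      using R \<tau> by (simp_all add: a_snoc)
    have "0 \<le> (\<Sum>j'<j. mc (\<sigma> @ [j']))" by (simp add: sum_nonneg mc_nonneg)
    then have IH1: "a \<sigma> \<le> s" using b by simp
    have IH2: "s < a \<sigma> + mc \<sigma>" using b mc_partial[where n="Suc j" and \<tau>=\<sigma>] by simp
    have "pre s n = \<sigma>" using Suc[of \<sigma>] len IH1 IH2 by simp
    moreover have "(LEAST j. s < a \<sigma> + (\<Sum>j'<Suc j. mc (\<sigma> @ [j']))) = j"
      using least_char[OF IH1 IH2] b by simp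
    ultimately show "pre s (Suc n) = \<tau>" using \<tau> by simp
  qed
qed

lemma pre_set: "{s \<in> {0..<1}. pre s n = \<tau>} = (if length \<tau> = n then {a \<tau>..<a \<tau> + mc \<tau>} else {})"
  using pre_iff a_nonneg[of \<tau>] a_bound[of \<tau>] by auto

lemma pre_take: "m \<le> n \<Longrightarrow> take m (pre s n) = pre s m"
proof (induction n)
  case 0 then show ?case by simp
next
  case (Suc n)
  then show ?case by (cases "m = Suc n") auto
qed


lemma pow_small: "0 < e \<Longrightarrow> 0 < c \<Longrightarrow> \<exists>k. c / 2 ^ k < (e::real)"
proof -
  assume e: "0 < e" and c: "0 < c"
  obtain k where "(1/2::real) ^ k < e / c" using real_arch_pow_inv[of "e / c" "1/2"] e c by auto
  then have "c * (1/2) ^ k < e" using c by (simp add: field_simps)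
  then show ?thesis by (auto simp: power_one_over field_simps)
qed

lemma pow_mono': "k \<le> k' \<Longrightarrow> 0 \<le> c \<Longrightarrow> c / 2 ^ k' \<le> (c::real) / 2 ^ k"
  by (intro divide_left_mono) (auto intro: power_increasing)

lemma C_pre_ne: "s \<in> {0..<1} \<Longrightarrow> C (pre s n) \<noteq> {}"
proof
  assume s: "s \<in> {0..<1}" and e: "C (pre s n) = {}"
  have "mc (pre s n) > 0" using pre_iff[OF s, of n "pre s n"] by simp
  then show False using e by (simp add: mc_def)
qed

definition pt :: "real \<Rightarrow> nat \<Rightarrow> 'a" where
  "pt s n = (SOME x. x \<in> C (pre s n))"

lemma pt_in: "s \<in> {0..<1} \<Longrightarrow> pt s n \<in> C (pre s n)"
  unfolding pt_def using C_pre_ne[of s n] by (simp add: some_in_eq)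

lemma C_pre_mono: "k \<le> m \<Longrightarrow> C (pre s m) \<subseteq> C (pre s k)"
  using C_take[of k "pre s m"] pre_take[of k m s] by simp

lemma pt_close: "s \<in> {0..<1} \<Longrightarrow> Suc k \<le> m \<Longrightarrow> y \<in> C (pre s (Suc k)) \<Longrightarrow> d y (pt s m) < 2 / 2 ^ Suc k"
  using pt_in[of s m] C_pre_mono[of "Suc k" m s] C_diam[of y "pre s (Suc k)" "pt s m" k] by auto

lemma pt_Cauchy: "s \<in> {0..<1} \<Longrightarrow> MCauchy (pt s)"
  unfolding MCauchy_def
proof (intro conjI allI impI)
  assume s: "s \<in> {0..<1}"
  show "range (pt s) \<subseteq> M" using pt_in[OF s] C_sub by blast
  fix e :: real assume "0 < e"
  then obtain k where k: "2 / 2 ^ k < e" using pow_small[of e 2] by auto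
  have "2 / 2 ^ Suc k \<le> (2::real) / 2 ^ k" by (rule pow_mono') auto
  then have k': "2 / 2 ^ Suc k < e" using k by simp
  show "\<exists>N. \<forall>n n'. N \<le> n \<longrightarrow> N \<le> n' \<longrightarrow> d (pt s n) (pt s n') < e"
  proof (intro exI allI impI)
    fix n n' assume "Suc k \<le> n" "Suc k \<le> n'"
    then have "pt s n \<in> C (pre s (Suc k))" using pt_in[OF s, of n] C_pre_mono[of "Suc k" n s] by auto
    then have "d (pt s n) (pt s n') < 2 / 2 ^ Suc k" using pt_close[OF s \<open>Suc k \<le> n'\<close>] by blast
    then show "d (pt s n) (pt s n') < e" using k' by simp
  qed
qed

definition psi :: "real \<Rightarrow> 'a" where
  "psi s = (SOME l. limitin mtopology (pt s) l sequentially)"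

lemma psi_lim: "s \<in> {0..<1} \<Longrightarrow> limitin mtopology (pt s) (psi s) sequentially"
  unfolding psi_def using complete pt_Cauchy[of s] unfolding mcomplete_def
  by (metis someI_ex)

lemma psi_in: "s \<in> {0..<1} \<Longrightarrow> psi s \<in> M"
  using psi_lim limitin_mspace by blast

lemma psi_close:
  assumes s: "s \<in> {0..<1}" and y: "y \<in> C (pre s (Suc k))"
  shows "d y (psi s) \<le> 2 / 2 ^ Suc k"
proof (rule field_le_epsilon)
  fix e :: real assume "0 < e"
  obtain N where N: "\<forall>n\<ge>N. pt s n \<in> M \<and> d (pt s n) (psi s) < e"
    using psi_lim[OF s] \<open>0 < e\<close> unfolding limit_metric_sequentially by blast
  define m where "m = max N (Suc k)"
  have "d (pt s m) (psi s) < e" "pt s m \<in> M" using N by (auto simp: m_def)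
  moreover have "d y (pt s m) < 2 / 2 ^ Suc k" using pt_close[OF s _ y] by (simp add: m_def)
  moreover have "y \<in> M" using y C_sub by auto
  ultimately show "d y (psi s) \<le> 2 / 2 ^ Suc k + e"
    using triangle[of y "pt s m" "psi s"] psi_in[OF s] by simp
qed


lemma space_UL[simp]: "space unit_lebesgue = {0..<1}"
  by (simp add: unit_lebesgue_def space_restrict_space)

lemma sets_UL: "A \<subseteq> {0..<1} \<Longrightarrow> A \<in> sets borel \<Longrightarrow> A \<in> sets unit_lebesgue"
  unfolding unit_lebesgue_def by (subst sets_restrict_space_iff) auto

lemma emeasure_UL: "A \<subseteq> {0..<1} \<Longrightarrow> emeasure unit_lebesgue A = emeasure lborel A"
  unfolding unit_lebesgue_def by (rule emeasure_restrict_space) auto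

lemma pre_meas: "(\<lambda>s. pre s n) \<in> measurable unit_lebesgue (count_space UNIV)"
proof (subst measurable_count_space_eq2_countable, intro conjI ballI)
  fix \<tau> :: "nat list"
  have "(\<lambda>s. pre s n) -` {\<tau>} \<inter> space unit_lebesgue = {s \<in> {0..<1}. pre s n = \<tau>}" by auto
  also have "\<dots> \<in> sets unit_lebesgue"
    unfolding pre_set using a_nonneg[of \<tau>] a_bound[of \<tau>] by (auto intro!: sets_UL)
  finally show "(\<lambda>s. pre s n) -` {\<tau>} \<inter> space unit_lebesgue \<in> sets unit_lebesgue" .
qed auto

lemma addr_meas: "(\<lambda>x. addr x n) \<in> measurable \<mu> (count_space UNIV)"
proof (subst measurable_count_space_eq2_countable, intro conjI ballI)
  fix \<tau> :: "nat list"
  have "(\<lambda>x. addr x n) -` {\<tau>} \<inter> space \<mu> = (if length \<tau> = n then C \<tau> else {})"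
    using space_eq by (auto simp: C_def)
  also have "\<dots> \<in> sets \<mu>" using C_sets by auto
  finally show "(\<lambda>x. addr x n) -` {\<tau>} \<inter> space \<mu> \<in> sets \<mu>" .
qed auto

lemma distr_pre_addr:
  "distr unit_lebesgue (count_space UNIV) (\<lambda>s. pre s n) = distr \<mu> (count_space UNIV) (\<lambda>x. addr x n)"
proof (rule measure_eqI_countable[where A=UNIV])
  fix \<tau> :: "nat list"
  have "emeasure (distr unit_lebesgue (count_space UNIV) (\<lambda>s. pre s n)) {\<tau>} =
      emeasure unit_lebesgue {s \<in> {0..<1}. pre s n = \<tau>}"
    by (subst emeasure_distr[OF pre_meas]) (auto intro!: arg_cong[where f="emeasure unit_lebesgue"])
  also have "\<dots> = (if length \<tau> = n then ennreal (mc \<tau>) else 0)"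
    unfolding pre_set using a_nonneg[of \<tau>] a_bound[of \<tau>] mc_nonneg[of \<tau>]
    by (auto simp: emeasure_UL)
  also have "\<dots> = emeasure \<mu> ((\<lambda>x. addr x n) -` {\<tau>} \<inter> space \<mu>)"
  proof -
    have "(\<lambda>x. addr x n) -` {\<tau>} \<inter> space \<mu> = (if length \<tau> = n then C \<tau> else {})"
      using space_eq by (auto simp: C_def)
    then show ?thesis by (simp add: mc_def P.emeasure_eq_measure)
  qed
  also have "\<dots> = emeasure (distr \<mu> (count_space UNIV) (\<lambda>x. addr x n)) {\<tau>}"
    by (subst emeasure_distr[OF addr_meas]) auto
  finally show "emeasure (distr unit_lebesgue (count_space UNIV) (\<lambda>s. pre s n)) {\<tau>} =
      emeasure (distr \<mu> (count_space UNIV) (\<lambda>x. addr x n)) {\<tau>}" .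
qed auto

lemma emeasure_pre_addr:
  "emeasure unit_lebesgue {s \<in> {0..<1}. pre s n \<in> T} = emeasure \<mu> {x \<in> M. addr x n \<in> T}"
proof -
  have "emeasure unit_lebesgue {s \<in> {0..<1}. pre s n \<in> T} =
      emeasure (distr unit_lebesgue (count_space UNIV) (\<lambda>s. pre s n)) T"
    by (subst emeasure_distr[OF pre_meas]) (auto intro!: arg_cong[where f="emeasure unit_lebesgue"])
  also have "\<dots> = emeasure (distr \<mu> (count_space UNIV) (\<lambda>x. addr x n)) T"
    by (simp add: distr_pre_addr)
  also have "\<dots> = emeasure \<mu> {x \<in> M. addr x n \<in> T}"
    by (subst emeasure_distr[OF addr_meas]) (auto simp: space_eq intro!: arg_cong[where f="emeasure \<mu>"])
  finally show ?thesis .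
qed


definition T :: "'a set \<Rightarrow> nat \<Rightarrow> nat list set" where
  "T U k = {\<tau>. \<forall>y\<in>C \<tau>. \<forall>z\<in>M. d y z \<le> 2 / 2 ^ Suc k \<longrightarrow> z \<in> U}"

lemma T_mono: "\<tau> \<in> T U k \<Longrightarrow> C \<tau>' \<subseteq> C \<tau> \<Longrightarrow> \<tau>' \<in> T U (Suc k)"
proof -
  assume a: "\<tau> \<in> T U k" "C \<tau>' \<subseteq> C \<tau>"
  have "2 / 2 ^ Suc (Suc k) \<le> (2::real) / 2 ^ Suc k" by (rule pow_mono') auto
  then show ?thesis using a unfolding T_def by fastforce
qed

lemma x_in_C_addr: "x \<in> M \<Longrightarrow> x \<in> C (addr x n)"
  by (simp add: C_def)

lemma C_addr_mono: "k \<le> m \<Longrightarrow> C (addr x m) \<subseteq> C (addr x k)"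
  using C_take[of k "addr x m"] addr_take[of k m x] by simp

lemma psi_preimage:
  assumes U: "openin mtopology U"
  shows "{s \<in> {0..<1}. psi s \<in> U} = (\<Union>k. {s \<in> {0..<1}. pre s (Suc k) \<in> T U k})"
proof (intro set_eqI iffI)
  fix s assume "s \<in> {s \<in> {0..<1}. psi s \<in> U}"
  then have s: "s \<in> {0..<1}" and pU: "psi s \<in> U" by auto
  obtain r where r: "r > 0" "mball (psi s) r \<subseteq> U" using U pU unfolding openin_mtopology by blast
  obtain k where k: "4 / 2 ^ k < r" using pow_small[of r 4] r by auto
  have "4 / 2 ^ Suc k \<le> (4::real) / 2 ^ k" by (rule pow_mono') auto
  then have k': "2 / 2 ^ Suc k + 2 / 2 ^ Suc k < r" using k by simp
  have "pre s (Suc k) \<in> T U k"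
    unfolding T_def
  proof (intro CollectI ballI impI)
    fix y z assume y: "y \<in> C (pre s (Suc k))" and z: "z \<in> M" and yz: "d y z \<le> 2 / 2 ^ Suc k"
    have "d y (psi s) \<le> 2 / 2 ^ Suc k" by (rule psi_close[OF s y])
    moreover have "y \<in> M" using y C_sub by auto
    ultimately have "d (psi s) z < r"
      using triangle[of "psi s" y z] psi_in[OF s] z yz k' commute[of y] by simp
    then show "z \<in> U" using r psi_in[OF s] z by auto
  qed
  then show "s \<in> (\<Union>k. {s \<in> {0..<1}. pre s (Suc k) \<in> T U k})" using s by auto
next
  fix s assume "s \<in> (\<Union>k. {s \<in> {0..<1}. pre s (Suc k) \<in> T U k})"
  then obtain k where s: "s \<in> {0..<1}" and T: "pre s (Suc k) \<in> T U k" by auto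
  obtain y where y: "y \<in> C (pre s (Suc k))" using C_pre_ne[OF s, of "Suc k"] by blast
  have "d y (psi s) \<le> 2 / 2 ^ Suc k" by (rule psi_close[OF s y])
  then have "psi s \<in> U" using T y psi_in[OF s] unfolding T_def by blast
  then show "s \<in> {s \<in> {0..<1}. psi s \<in> U}" using s by auto
qed

lemma open_decomp:
  assumes U: "openin mtopology U"
  shows "U = (\<Union>k. {x \<in> M. addr x (Suc k) \<in> T U k})"
proof (intro set_eqI iffI)
  fix x assume xU: "x \<in> U"
  then have x: "x \<in> M" using U openin_subset by fastforce
  obtain r where r: "r > 0" "mball x r \<subseteq> U" using U xU unfolding openin_mtopology by blast
  obtain k where k: "4 / 2 ^ k < r" using pow_small[of r 4] r by auto
  have "4 / 2 ^ Suc k \<le> (4::real) / 2 ^ k" by (rule pow_mono') auto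
  then have k': "2 / 2 ^ Suc k + 2 / 2 ^ Suc k < r" using k by simp
  have "addr x (Suc k) \<in> T U k"
    unfolding T_def
  proof (intro CollectI ballI impI)
    fix y z assume y: "y \<in> C (addr x (Suc k))" and z: "z \<in> M" and yz: "d y z \<le> 2 / 2 ^ Suc k"
    have "d x y < 2 / 2 ^ Suc k" using C_diam[OF x_in_C_addr[OF x] y] by simp
    moreover have "y \<in> M" using y C_sub by auto
    ultimately have "d x z < r"
      using triangle[of x y z] x z yz k' by simp
    then show "z \<in> U" using r x z by auto
  qed
  then show "x \<in> (\<Union>k. {x \<in> M. addr x (Suc k) \<in> T U k})" using x by auto
next
  fix x assume "x \<in> (\<Union>k. {x \<in> M. addr x (Suc k) \<in> T U k})"
  then obtain k where x: "x \<in> M" and T: "addr x (Suc k) \<in> T U k" by auto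
  then show "x \<in> U" using x_in_C_addr[OF x] unfolding T_def by fastforce
qed

theorem psi_param: "psi \<in> measurable unit_lebesgue \<mu> \<and> distr unit_lebesgue \<mu> psi = \<mu>"
proof -
  define E where "E U k = {s \<in> {0..<1}. pre s (Suc k) \<in> T U k}" for U k
  define G where "G U k = {x \<in> M. addr x (Suc k) \<in> T U k}" for U k
  have E_sets: "E U k \<in> sets unit_lebesgue" for U k
  proof -
    have eq: "E U k = (\<lambda>s. pre s (Suc k)) -` T U k \<inter> space unit_lebesgue"
      unfolding E_def space_UL by blast
    have "(\<lambda>s. pre s (Suc k)) -` T U k \<inter> space unit_lebesgue \<in> sets unit_lebesgue"
      by (rule measurable_sets[OF pre_meas]) simp
    then show ?thesis unfolding eq .
  qed
  have G_sets: "G U k \<in> sets \<mu>" for U k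
  proof -
    have eq: "G U k = (\<lambda>x. addr x (Suc k)) -` T U k \<inter> space \<mu>"
      unfolding G_def space_eq by blast
    have "(\<lambda>x. addr x (Suc k)) -` T U k \<inter> space \<mu> \<in> sets \<mu>"
      by (rule measurable_sets[OF addr_meas]) simp
    then show ?thesis unfolding eq .
  qed
  have E_inc: "incseq (E U)" for U
  proof (rule incseq_SucI)
    fix k show "E U k \<subseteq> E U (Suc k)"
    proof
      fix s assume "s \<in> E U k"
      then have "s \<in> {0..<1}" "pre s (Suc k) \<in> T U k" by (auto simp: E_def)
      moreover have "C (pre s (Suc (Suc k))) \<subseteq> C (pre s (Suc k))" by (rule C_pre_mono) simp
      ultimately show "s \<in> E U (Suc k)" using T_mono unfolding E_def by blast
    qed
  qed
  have G_inc: "incseq (G U)" for U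
  proof (rule incseq_SucI)
    fix k show "G U k \<subseteq> G U (Suc k)"
    proof
      fix x assume "x \<in> G U k"
      then have "x \<in> M" "addr x (Suc k) \<in> T U k" by (auto simp: G_def)
      moreover have "C (addr x (Suc (Suc k))) \<subseteq> C (addr x (Suc k))" by (rule C_addr_mono) simp
      ultimately show "x \<in> G U (Suc k)" using T_mono unfolding G_def by blast
    qed
  qed
  have EG: "emeasure unit_lebesgue (E U k) = emeasure \<mu> (G U k)" for U k
    unfolding E_def G_def by (rule emeasure_pre_addr)
  have psi_fun: "psi \<in> space unit_lebesgue \<rightarrow> M" using psi_in by (simp add: Pi_iff)
  have pre_open: "psi -` U \<inter> space unit_lebesgue = (\<Union>k. E U k)" if "openin mtopology U" for U
  proof -
    have "psi -` U \<inter> space unit_lebesgue = {s \<in> {0..<1}. psi s \<in> U}" by auto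
    also have "\<dots> = (\<Union>k. E U k)" unfolding E_def by (rule psi_preimage[OF that])
    finally show ?thesis .
  qed
  have meas: "psi \<in> measurable unit_lebesgue \<mu>"
  proof (rule measurable_sigma_sets[OF sets_eq])
    show "{U. openin mtopology U} \<subseteq> Pow M" using openin_subset by fastforce
    show "psi \<in> space unit_lebesgue \<rightarrow> M" by (rule psi_fun)
    fix U assume "U \<in> {U. openin mtopology U}"
    then show "psi -` U \<inter> space unit_lebesgue \<in> sets unit_lebesgue"
      using pre_open E_sets by auto
  qed
  have "distr unit_lebesgue \<mu> psi = \<mu>"
  proof (rule measure_eqI_generator_eq[where \<Omega>=M and E="{U. openin mtopology U}" and A="\<lambda>i. M"])
    show "Int_stable {U. openin mtopology U}" by (auto simp: Int_stable_def)
    show "{U. openin mtopology U} \<subseteq> Pow M" using openin_subset by fastforce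
    show "sets (distr unit_lebesgue \<mu> psi) = sigma_sets M {U. openin mtopology U}" by (simp add: sets_eq)
    show "sets \<mu> = sigma_sets M {U. openin mtopology U}" by (rule sets_eq)
    show "range (\<lambda>i. M) \<subseteq> {U. openin mtopology U}" by auto
    show "(\<Union>i. M) = M" by simp
    show "emeasure (distr unit_lebesgue \<mu> psi) M \<noteq> \<infinity>" for i
    proof -
      have "psi -` M \<inter> space unit_lebesgue = {0..<1}" using psi_in by auto
      then have "emeasure (distr unit_lebesgue \<mu> psi) M = emeasure unit_lebesgue {0..<1}"
        using emeasure_distr[OF meas, of M] space_eq sets.top[of \<mu>] by simp
      also have "\<dots> = 1" by (simp add: emeasure_UL)
      finally show ?thesis by simp
    qed
    fix U assume "U \<in> {U. openin mtopology U}"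
    then have U: "openin mtopology U" by simp
    then have Us: "U \<in> sets \<mu>" by (rule open_sets)
    have "emeasure (distr unit_lebesgue \<mu> psi) U = emeasure unit_lebesgue (\<Union>k. E U k)"
      using emeasure_distr[OF meas Us] pre_open[OF U] by simp
    also have "\<dots> = (SUP k. emeasure unit_lebesgue (E U k))"
      using E_sets E_inc by (intro SUP_emeasure_incseq[symmetric]) auto
    also have "\<dots> = (SUP k. emeasure \<mu> (G U k))" by (simp add: EG)
    also have "\<dots> = emeasure \<mu> (\<Union>k. G U k)"
      using G_sets G_inc by (intro SUP_emeasure_incseq) auto
    also have "(\<Union>k. G U k) = U" using open_decomp[OF U] by (simp add: G_def)
    finally show "emeasure (distr unit_lebesgue \<mu> psi) U = emeasure \<mu> U" .
  qed
  with meas show ?thesis by simp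
qed

end


lemma param_exists:
  assumes "mm_space X"
  shows "\<exists>\<psi>. parameter X \<psi>"
proof -
  define d where "d = fst X"
  define \<mu> where "\<mu> = snd X"
  define M where "M = space \<mu>"
  have ms: "Metric_space M d" and cp: "Metric_space.mcomplete M d"
    and sep: "separable_space (Metric_space.mtopology M d)"
    and sets: "sets \<mu> = sigma_sets M {U. openin (Metric_space.mtopology M d) U}"
    and ps: "prob_space \<mu>"
    using assms unfolding mm_space_def Let_def d_def \<mu>_def M_def by auto
  interpret Metric_space M d by (rule ms)
  have Mne: "M \<noteq> {}" using prob_space.not_empty[OF ps] by (simp add: M_def)
  obtain Cs where Cs: "countable Cs" "Cs \<subseteq> M" "mtopology closure_of Cs = M"
    using sep unfolding separable_space_def by auto
  have Csne: "Cs \<noteq> {}" using Cs(3) Mne by auto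
  define D where "D = from_nat_into Cs"
  have D_in: "D j \<in> M" for j using from_nat_into[OF Csne] Cs(2) by (auto simp: D_def)
  have D_dense: "\<exists>j. d x (D j) < e" if xe: "x \<in> M" "0 < e" for x e
  proof -
    have "x \<in> mtopology closure_of Cs" using Cs(3) xe by simp
    then obtain y where "y \<in> Cs" "y \<in> mball x e" using xe unfolding metric_closure_of by blast
    moreover have "y \<in> range D" using \<open>y \<in> Cs\<close> range_from_nat_into[OF Csne Cs(1)] by (simp add: D_def)
    then obtain j where "y = D j" by blast
    ultimately show ?thesis by auto
  qed
  have pc: "param_constr M d \<mu> D"
    unfolding param_constr_def param_constr_axioms_def
    using ms ps sets cp D_in D_dense by (simp add: M_def)
  interpret param_constr M d \<mu> D by (rule pc)
  show ?thesis using psi_param unfolding parameter_def \<mu>_def by blast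
qed


lemma interp_metric:
  fixes d0 :: "'a \<Rightarrow> 'a \<Rightarrow> real" and d1 :: "'b \<Rightarrow> 'b \<Rightarrow> real"
  assumes m0: "Metric_space M0 d0" and m1: "Metric_space M1 d1"
    and f: "f \<in> M1 \<rightarrow> M0" and lip: "\<And>x y. x \<in> M1 \<Longrightarrow> y \<in> M1 \<Longrightarrow> d0 (f x) (f y) \<le> d1 x y"
    and t: "0 < t" "t \<le> 1"
    and dt: "dt = (\<lambda>x y. (1-t) * d0 (f x) (f y) + t * d1 x y)"
  shows "Metric_space M1 dt \<and> Metric_space.mtopology M1 dt = Metric_space.mtopology M1 d1
     \<and> (Metric_space.mcomplete M1 d1 \<longrightarrow> Metric_space.mcomplete M1 dt)"
proof -
  interpret A: Metric_space M0 d0 by (rule m0)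
  interpret B: Metric_space M1 d1 by (rule m1)
  have up: "dt x y \<le> d1 x y" if "x \<in> M1" "y \<in> M1" for x y
  proof -
    have "(1-t) * d0 (f x) (f y) \<le> (1-t) * d1 x y" using lip[OF that] t by (intro mult_left_mono) auto
    then show ?thesis unfolding dt by (simp add: algebra_simps)
  qed
  have lo: "t * d1 x y \<le> dt x y" for x y
  proof -
    have "0 \<le> (1-t) * d0 (f x) (f y)" using t by simp
    then show ?thesis unfolding dt by simp
  qed
  have ms: "Metric_space M1 dt"
  proof
    fix x y z
    show "0 \<le> dt x y" using lo[of x y] t by (smt (verit) B.nonneg mult_nonneg_nonneg)
    show "dt x y = dt y x" unfolding dt using A.commute B.commute by simp
    assume x: "x \<in> M1" and y: "y \<in> M1"
    show "dt x y = 0 \<longleftrightarrow> x = y"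
    proof
      assume "dt x y = 0"
      then have "t * d1 x y \<le> 0" using lo[of x y] by simp
      then have "d1 x y = 0" using t B.nonneg[of x y] by (simp add: mult_le_0_iff)
      then show "x = y" using x y by simp
    next
      assume "x = y"
      moreover have "f y \<in> M0" using y f by auto
      ultimately show "dt x y = 0" unfolding dt using y by simp
    qed
    assume z: "z \<in> M1"
    have "d0 (f x) (f z) \<le> d0 (f x) (f y) + d0 (f y) (f z)" using x y z f by (intro A.triangle) auto
    then have "(1-t) * d0 (f x) (f z) \<le> (1-t) * (d0 (f x) (f y) + d0 (f y) (f z))"
      using t by (intro mult_left_mono) auto
    moreover have "t * d1 x z \<le> t * (d1 x y + d1 y z)"
      using t B.triangle[OF x y z] by (intro mult_left_mono) auto
    ultimately show "dt x z \<le> dt x y + dt y z" unfolding dt by (simp add: algebra_simps)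
  qed
  interpret C: Metric_space M1 dt by (rule ms)
  have top: "C.mtopology = B.mtopology"
    unfolding topology_eq
  proof (intro allI iffI)
    fix U assume "openin C.mtopology U"
    then have U: "U \<subseteq> M1" "\<And>x. x \<in> U \<Longrightarrow> \<exists>r>0. C.mball x r \<subseteq> U" unfolding C.openin_mtopology by auto
    show "openin B.mtopology U" unfolding B.openin_mtopology
    proof (intro conjI allI impI)
      show "U \<subseteq> M1" by (rule U(1))
      fix x assume "x \<in> U"
      then obtain r where r: "r > 0" "C.mball x r \<subseteq> U" using U(2) by blast
      have "B.mball x r \<subseteq> C.mball x r" using up by fastforce
      then show "\<exists>r>0. B.mball x r \<subseteq> U" using r by blast
    qed
  next
    fix U assume "openin B.mtopology U"
    then have U: "U \<subseteq> M1" "\<And>x. x \<in> U \<Longrightarrow> \<exists>r>0. B.mball x r \<subseteq> U" unfolding B.openin_mtopology by auto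
    show "openin C.mtopology U" unfolding C.openin_mtopology
    proof (intro conjI allI impI)
      show "U \<subseteq> M1" by (rule U(1))
      fix x assume "x \<in> U"
      then obtain r where r: "r > 0" "B.mball x r \<subseteq> U" using U(2) by blast
      have "C.mball x (t * r) \<subseteq> B.mball x r"
      proof
        fix y assume "y \<in> C.mball x (t * r)"
        then have "x \<in> M1" "y \<in> M1" "t * d1 x y < t * r" using lo[of x y] by auto
        then show "y \<in> B.mball x r" using t by simp
      qed
      then show "\<exists>r>0. C.mball x r \<subseteq> U" using r t by (intro exI[of _ "t * r"]) auto
    qed
  qed
  have "C.mcomplete" if B.mcomplete
    unfolding C.mcomplete_def
  proof (intro allI impI)
    fix \<sigma> assume "C.MCauchy \<sigma>"
    then have "B.MCauchy \<sigma>"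
      unfolding C.MCauchy_def B.MCauchy_def
    proof (intro conjI allI impI)
      assume H: "range \<sigma> \<subseteq> M1 \<and> (\<forall>\<epsilon>>0. \<exists>N. \<forall>n n'. N \<le> n \<longrightarrow> N \<le> n' \<longrightarrow> dt (\<sigma> n) (\<sigma> n') < \<epsilon>)"
      then show "range \<sigma> \<subseteq> M1" by simp
      fix e :: real assume "0 < e"
      then obtain N where N: "\<forall>n n'. N \<le> n \<longrightarrow> N \<le> n' \<longrightarrow> dt (\<sigma> n) (\<sigma> n') < t * e"
        using H t by (meson mult_pos_pos)
      show "\<exists>N. \<forall>n n'. N \<le> n \<longrightarrow> N \<le> n' \<longrightarrow> d1 (\<sigma> n) (\<sigma> n') < e"
      proof (intro exI allI impI)
        fix n n' assume "N \<le> n" "N \<le> n'"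
        then have "t * d1 (\<sigma> n) (\<sigma> n') < t * e" using N lo[of "\<sigma> n" "\<sigma> n'"] by fastforce
        then show "d1 (\<sigma> n) (\<sigma> n') < e" using t by simp
      qed
    qed
    then show "\<exists>x. limitin C.mtopology \<sigma> x sequentially"
      using that unfolding B.mcomplete_def top by blast
  qed
  then show ?thesis using ms top by blast
qed


lemma box_le:
  assumes "parameter X \<phi>" "parameter Y \<phi>'" "I0 \<in> sets unit_lebesgue"
    "1 - \<epsilon> \<le> measure unit_lebesgue I0" "0 \<le> \<epsilon>"
    "\<forall>s\<in>I0. \<forall>t\<in>I0. \<bar>fst X (\<phi> s) (\<phi> t) - fst Y (\<phi>' s) (\<phi>' t)\<bar> \<le> \<epsilon>"
  shows "0 \<le> box_dist X Y \<and> box_dist X Y \<le> \<epsilon>"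
proof -
  define S where "S = {\<epsilon>. \<epsilon> \<ge> 0 \<and> (\<exists>\<phi> \<psi> I0. parameter X \<phi> \<and> parameter Y \<psi> \<and>
       I0 \<in> sets unit_lebesgue \<and> measure unit_lebesgue I0 \<ge> 1 - \<epsilon> \<and>
       (\<forall>s\<in>I0. \<forall>t\<in>I0. \<bar>fst X (\<phi> s) (\<phi> t) - fst Y (\<psi> s) (\<psi> t)\<bar> \<le> \<epsilon>))}"
  have bd: "box_dist X Y = Inf S" by (simp add: box_dist_def S_def)
  have eS: "\<epsilon> \<in> S" unfolding S_def using assms by blast
  have bb: "bdd_below S" unfolding S_def by (rule bdd_belowI[of _ 0]) auto
  have "Inf S \<le> \<epsilon>" by (rule cInf_lower[OF eS bb])
  moreover have "0 \<le> Inf S" using eS by (intro cInf_greatest) (auto simp: S_def)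
  ultimately show ?thesis by (simp add: bd)
qed

lemma interp_diff0:
  fixes a b t R :: real
  assumes "0 \<le> a" "a \<le> b" "0 \<le> t" "b \<le> R"
  shows "\<bar>(1 - t) * a + t * b - a\<bar> \<le> t * R"
proof -
  have "(1 - t) * a + t * b - a = t * (b - a)" by (simp add: algebra_simps)
  moreover have "t * (b - a) \<le> t * R" using assms by (intro mult_left_mono) auto
  moreover have "0 \<le> t * (b - a)" using assms by simp
  ultimately show ?thesis by simp
qed

lemma interp_diff1:
  fixes a b t t0 R :: real
  assumes "0 \<le> a" "a \<le> b" "b \<le> R"
  shows "\<bar>((1 - t) * a + t * b) - ((1 - t0) * a + t0 * b)\<bar> \<le> \<bar>t - t0\<bar> * R"
proof -
  have "((1 - t) * a + t * b) - ((1 - t0) * a + t0 * b) = (t - t0) * (b - a)" by (simp add: algebra_simps)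
  then have "\<bar>((1 - t) * a + t * b) - ((1 - t0) * a + t0 * b)\<bar> = \<bar>t - t0\<bar> * (b - a)"
    using assms by (simp add: abs_mult)
  also have "\<dots> \<le> \<bar>t - t0\<bar> * R" using assms by (intro mult_left_mono) auto
  finally show ?thesis .
qed

theorem proposition7p1:
  fixes X0 :: "'a mm" and X1 :: "'b mm" and f :: "'b \<Rightarrow> 'a"
  assumes "mm_space X0" and "mm_space X1"
    and "X0 \<prec> X1"
    and "lip1 X1 X0 f" and "f \<in> measurable (snd X1) (snd X0)"
    and "distr (snd X1) (snd X0) f = snd X0"
  defines "Xt \<equiv> interp X0 X1 f"
  shows "(\<forall>t\<in>{0<..1}. mm_space (Xt t))
    \<and> Xt 1 = X1
    \<and> ((\<lambda>t. box_dist (Xt t) X0) \<longlongrightarrow> 0) (at_right 0)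
    \<and> (\<forall>t0\<in>{0<..1}. ((\<lambda>t. box_dist (Xt t) (Xt t0)) \<longlongrightarrow> 0) (at t0 within {0<..1}))
    \<and> (\<forall>t\<in>{0<..1}. X0 \<prec> Xt t)
    \<and> (\<forall>s t. 0 < s \<and> s \<le> t \<and> t \<le> 1 \<longrightarrow> Xt s \<prec> Xt t)"
proof -
  define d0 where "d0 = fst X0"
  define d1 where "d1 = fst X1"
  define \<mu>0 where "\<mu>0 = snd X0"
  define \<mu>1 where "\<mu>1 = snd X1"
  define M0 where "M0 = space \<mu>0"
  define M1 where "M1 = space \<mu>1"
  have ms0: "Metric_space M0 d0"
    using assms(1) unfolding mm_space_def Let_def d0_def \<mu>0_def M0_def by auto
  have ms1: "Metric_space M1 d1" and cp1: "Metric_space.mcomplete M1 d1"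
    and sep1: "separable_space (Metric_space.mtopology M1 d1)"
    and sets1: "sets \<mu>1 = sigma_sets M1 {U. openin (Metric_space.mtopology M1 d1) U}"
    and ps1: "prob_space \<mu>1"
    using assms(2) unfolding mm_space_def Let_def d1_def \<mu>1_def M1_def by auto
  interpret B: Metric_space M1 d1 by (rule ms1)
  interpret A: Metric_space M0 d0 by (rule ms0)
  have fM: "f \<in> M1 \<rightarrow> M0" and lip: "\<And>x y. x \<in> M1 \<Longrightarrow> y \<in> M1 \<Longrightarrow> d0 (f x) (f y) \<le> d1 x y"
    using assms(4) unfolding lip1_def d0_def d1_def M0_def M1_def \<mu>0_def \<mu>1_def by auto
  define dt where "dt t = (\<lambda>x y. (1-t) * d0 (f x) (f y) + t * d1 x y)" for t
  have Xt_fst: "fst (Xt t) = dt t" for t by (simp add: Xt_def interp_def dt_def d0_def d1_def)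
  have Xt_snd: "snd (Xt t) = \<mu>1" for t by (simp add: Xt_def interp_def \<mu>1_def)
  have P1: "\<forall>t\<in>{0<..1}. mm_space (Xt t)"
  proof
    fix t :: real assume t: "t \<in> {0<..1}"
    have im: "Metric_space M1 (dt t) \<and> Metric_space.mtopology M1 (dt t) = Metric_space.mtopology M1 d1
     \<and> (Metric_space.mcomplete M1 d1 \<longrightarrow> Metric_space.mcomplete M1 (dt t))"
      by (rule interp_metric[OF ms0 ms1 fM lip]) (use t in \<open>auto simp: dt_def\<close>)
    show "mm_space (Xt t)"
      unfolding mm_space_def Let_def Xt_fst Xt_snd M1_def[symmetric]
      using im cp1 sep1 sets1 ps1 by simp
  qed
  have P2: "Xt 1 = X1"
    by (rule prod_eqI) (simp_all add: Xt_def interp_def)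
  obtain \<psi> where \<psi>: "parameter X1 \<psi>" using param_exists[OF assms(2)] by blast
  have \<psi>m: "\<psi> \<in> measurable unit_lebesgue \<mu>1" and \<psi>d: "distr unit_lebesgue \<mu>1 \<psi> = \<mu>1"
    using \<psi> unfolding parameter_def \<mu>1_def by auto
  have \<psi>in: "\<psi> s \<in> M1" if "s \<in> {0..<1}" for s
    using measurable_space[OF \<psi>m, of s] that unfolding M1_def unit_lebesgue_def
    by (simp add: space_restrict_space)
  have parXt: "parameter (Xt t) \<psi>" for t using \<psi> unfolding parameter_def Xt_snd \<mu>1_def .
  have fm: "f \<in> measurable \<mu>1 \<mu>0" using assms(5) by (simp add: \<mu>0_def \<mu>1_def)
  have par0: "parameter X0 (\<lambda>s. f (\<psi> s))"
    unfolding parameter_def \<mu>0_def[symmetric]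
  proof
    show "(\<lambda>s. f (\<psi> s)) \<in> measurable unit_lebesgue \<mu>0" using measurable_comp[OF \<psi>m fm] by (simp add: comp_def)
    have "distr unit_lebesgue \<mu>0 (\<lambda>s. f (\<psi> s)) = distr (distr unit_lebesgue \<mu>1 \<psi>) \<mu>0 f"
      using distr_distr[OF fm \<psi>m] by (simp add: comp_def)
    also have "\<dots> = \<mu>0" using assms(6) \<psi>d by (simp add: \<mu>0_def \<mu>1_def)
    finally show "distr unit_lebesgue \<mu>0 (\<lambda>s. f (\<psi> s)) = \<mu>0" .
  qed
  have key: "\<exists>R>0. \<exists>I0. I0 \<in> sets unit_lebesgue \<and> 1 - \<epsilon> \<le> measure unit_lebesgue I0 \<and> I0 \<subseteq> {0..<1}
      \<and> (\<forall>s\<in>I0. \<forall>s'\<in>I0. d1 (\<psi> s) (\<psi> s') \<le> R)" if e: "0 < \<epsilon>" for \<epsilon>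
  proof -
    interpret P: prob_space \<mu>1 by (rule ps1)
    obtain x0 where x0: "x0 \<in> M1" using P.not_empty unfolding M1_def by blast
    define Bn where "Bn n = B.mball x0 (real n)" for n
    have Bs: "Bn n \<in> sets \<mu>1" for n
      unfolding sets1 Bn_def by (rule sigma_sets.Basic) simp
    have Binc: "incseq Bn" unfolding Bn_def
      by (rule incseq_SucI) auto
    have BU: "(\<Union>n. Bn n) = M1"
    proof (intro set_eqI iffI)
      fix x assume "x \<in> M1"
      obtain n where "d1 x0 x < real n" using reals_Archimedean2 by blast
      then show "x \<in> (\<Union>n. Bn n)" using x0 \<open>x \<in> M1\<close> by (auto simp: Bn_def)
    qed (auto simp: Bn_def)
    have "(\<lambda>n. measure \<mu>1 (Bn n)) \<longlonglongrightarrow> measure \<mu>1 M1"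
      using P.finite_Lim_measure_incseq[of Bn] Bs Binc BU by auto
    moreover have "measure \<mu>1 M1 = 1" using P.prob_space by (simp add: M1_def)
    ultimately have "eventually (\<lambda>n. 1 - \<epsilon> < measure \<mu>1 (Bn n)) sequentially"
      using e by (intro order_tendstoD) auto
    then obtain n where n: "1 - \<epsilon> < measure \<mu>1 (Bn n)" by (auto simp: eventually_sequentially)
    define I0 where "I0 = \<psi> -` Bn n \<inter> space unit_lebesgue"
    have I0s: "I0 \<in> sets unit_lebesgue" unfolding I0_def by (rule measurable_sets[OF \<psi>m Bs])
    have "measure unit_lebesgue I0 = measure (distr unit_lebesgue \<mu>1 \<psi>) (Bn n)"
      unfolding I0_def by (rule measure_distr[OF \<psi>m Bs, symmetric])
    also have "\<dots> = measure \<mu>1 (Bn n)" by (simp add: \<psi>d)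
    finally have mI0: "1 - \<epsilon> \<le> measure unit_lebesgue I0" using n by simp
    have sub: "I0 \<subseteq> {0..<1}" unfolding I0_def unit_lebesgue_def by (auto simp: space_restrict_space)
    have bnd: "d1 (\<psi> s) (\<psi> s') \<le> 2 * real n" if "s \<in> I0" "s' \<in> I0" for s s'
    proof -
      have "\<psi> s \<in> Bn n" "\<psi> s' \<in> Bn n" using that by (auto simp: I0_def)
      then have "d1 x0 (\<psi> s) < real n" "d1 x0 (\<psi> s') < real n" "\<psi> s \<in> M1" "\<psi> s' \<in> M1"
        by (auto simp: Bn_def)
      then show ?thesis using B.triangle[of "\<psi> s" x0 "\<psi> s'"] x0 B.commute[of "\<psi> s" x0] by simp
    qed
    show ?thesis
      using I0s mI0 sub bnd by (intro exI[of _ "2 * real n + 1"] conjI exI[of _ I0]) force+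
  qed
  have d0_le: "0 \<le> d0 (f (\<psi> s)) (f (\<psi> s'))" "d0 (f (\<psi> s)) (f (\<psi> s')) \<le> d1 (\<psi> s) (\<psi> s')"
    if "s \<in> {0..<1}" "s' \<in> {0..<1}" for s s'
    using lip[OF \<psi>in[OF that(1)] \<psi>in[OF that(2)]] by auto
  have P3: "((\<lambda>t. box_dist (Xt t) X0) \<longlongrightarrow> 0) (at_right 0)"
    unfolding tendsto_iff
  proof (intro allI impI)
    fix \<epsilon> :: real assume e: "0 < \<epsilon>"
    then obtain R I0 where R: "R > 0" and I0: "I0 \<in> sets unit_lebesgue" "1 - \<epsilon>/2 \<le> measure unit_lebesgue I0"
      "I0 \<subseteq> {0..<1}" "\<forall>s\<in>I0. \<forall>s'\<in>I0. d1 (\<psi> s) (\<psi> s') \<le> R"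
      using key[of "\<epsilon>/2"] by auto
    show "eventually (\<lambda>t. dist (box_dist (Xt t) X0) 0 < \<epsilon>) (at_right 0)"
      unfolding eventually_at_right_field
    proof (intro exI[of _ "\<epsilon> / 2 / R"] conjI allI impI)
      show "0 < \<epsilon> / 2 / R" using e R by simp
      fix t :: real assume t: "0 < t" "t < \<epsilon> / 2 / R"
      have tR: "t * R \<le> \<epsilon> / 2" using t R by (simp add: field_simps)
      have "\<forall>s\<in>I0. \<forall>s'\<in>I0. \<bar>fst (Xt t) (\<psi> s) (\<psi> s') - fst X0 (f (\<psi> s)) (f (\<psi> s'))\<bar> \<le> \<epsilon> / 2"
      proof (intro ballI)
        fix s s' assume ss: "s \<in> I0" "s' \<in> I0"
        then have "s \<in> {0..<1}" "s' \<in> {0..<1}" using I0(3) by auto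
        then have "\<bar>(1 - t) * d0 (f (\<psi> s)) (f (\<psi> s')) + t * d1 (\<psi> s) (\<psi> s') - d0 (f (\<psi> s)) (f (\<psi> s'))\<bar> \<le> t * R"
          using d0_le I0(4) ss t by (intro interp_diff0) auto
        then show "\<bar>fst (Xt t) (\<psi> s) (\<psi> s') - fst X0 (f (\<psi> s)) (f (\<psi> s'))\<bar> \<le> \<epsilon> / 2"
          using tR by (simp add: Xt_fst dt_def d0_def)
      qed
      then have "0 \<le> box_dist (Xt t) X0 \<and> box_dist (Xt t) X0 \<le> \<epsilon> / 2"
        using e by (intro box_le[OF parXt par0 I0(1,2)]) auto
      then show "dist (box_dist (Xt t) X0) 0 < \<epsilon>" using e by (simp add: dist_real_def)
    qed
  qed
  have P4: "\<forall>t0\<in>{0<..1}. ((\<lambda>t. box_dist (Xt t) (Xt t0)) \<longlongrightarrow> 0) (at t0 within {0<..1})"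
  proof (intro ballI)
    fix t0 :: real assume t0: "t0 \<in> {0<..1}"
    show "((\<lambda>t. box_dist (Xt t) (Xt t0)) \<longlongrightarrow> 0) (at t0 within {0<..1})"
      unfolding tendsto_iff
    proof (intro allI impI)
      fix \<epsilon> :: real assume e: "0 < \<epsilon>"
      then obtain R I0 where R: "R > 0" and I0: "I0 \<in> sets unit_lebesgue" "1 - \<epsilon>/2 \<le> measure unit_lebesgue I0"
        "I0 \<subseteq> {0..<1}" "\<forall>s\<in>I0. \<forall>s'\<in>I0. d1 (\<psi> s) (\<psi> s') \<le> R"
        using key[of "\<epsilon>/2"] by auto
      show "eventually (\<lambda>t. dist (box_dist (Xt t) (Xt t0)) 0 < \<epsilon>) (at t0 within {0<..1})"
        unfolding eventually_at
      proof (intro exI[of _ "\<epsilon> / 2 / R"] conjI ballI impI)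
        show "0 < \<epsilon> / 2 / R" using e R by simp
        fix t :: real assume t: "t \<in> {0<..1}" "t \<noteq> t0 \<and> dist t t0 < \<epsilon> / 2 / R"
        have tR: "\<bar>t - t0\<bar> * R \<le> \<epsilon> / 2" using t R by (simp add: field_simps dist_real_def)
        have "\<forall>s\<in>I0. \<forall>s'\<in>I0. \<bar>fst (Xt t) (\<psi> s) (\<psi> s') - fst (Xt t0) (\<psi> s) (\<psi> s')\<bar> \<le> \<epsilon> / 2"
        proof (intro ballI)
          fix s s' assume ss: "s \<in> I0" "s' \<in> I0"
          then have "s \<in> {0..<1}" "s' \<in> {0..<1}" using I0(3) by auto
          then have "\<bar>((1 - t) * d0 (f (\<psi> s)) (f (\<psi> s')) + t * d1 (\<psi> s) (\<psi> s')) -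
              ((1 - t0) * d0 (f (\<psi> s)) (f (\<psi> s')) + t0 * d1 (\<psi> s) (\<psi> s'))\<bar> \<le> \<bar>t - t0\<bar> * R"
            using d0_le I0(4) ss by (intro interp_diff1) auto
          then show "\<bar>fst (Xt t) (\<psi> s) (\<psi> s') - fst (Xt t0) (\<psi> s) (\<psi> s')\<bar> \<le> \<epsilon> / 2"
            using tR by (simp add: Xt_fst dt_def)
        qed
        then have "0 \<le> box_dist (Xt t) (Xt t0) \<and> box_dist (Xt t) (Xt t0) \<le> \<epsilon> / 2"
          using e by (intro box_le[OF parXt parXt I0(1,2)]) auto
        then show "dist (box_dist (Xt t) (Xt t0)) 0 < \<epsilon>" using e by (simp add: dist_real_def)
      qed
    qed
  qed
  have P5: "\<forall>t\<in>{0<..1}. X0 \<prec> Xt t"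
  proof
    fix t :: real assume t: "t \<in> {0<..1}"
    have "lip1 (Xt t) X0 f"
      unfolding lip1_def Xt_fst Xt_snd
    proof (intro conjI ballI)
      show "f \<in> space \<mu>1 \<rightarrow> space (snd X0)" using fM by (simp add: M1_def M0_def \<mu>0_def)
      fix x x' assume "x \<in> space \<mu>1" "x' \<in> space \<mu>1"
      then have "0 \<le> d0 (f x) (f x')" "d0 (f x) (f x') \<le> d1 x x'" using lip by (auto simp: M1_def)
      then have "\<bar>(1 - t) * d0 (f x) (f x') + t * d1 x x' - d0 (f x) (f x')\<bar> \<le> t * d1 x x'"
        using t by (intro interp_diff0) auto
      moreover have "(1 - t) * d0 (f x) (f x') + t * d1 x x' - d0 (f x) (f x') = t * (d1 x x' - d0 (f x) (f x'))"
        by (simp add: algebra_simps)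
      moreover have "0 \<le> t * (d1 x x' - d0 (f x) (f x'))"
        using t \<open>d0 (f x) (f x') \<le> d1 x x'\<close> by simp
      ultimately show "fst X0 (f x) (f x') \<le> dt t x x'"
        by (simp add: dt_def d0_def)
    qed
    then show "X0 \<prec> Xt t"
      unfolding lip_dominated_def Xt_snd using fm assms(6) by (auto simp: \<mu>0_def \<mu>1_def)
  qed
  have P6: "\<forall>s t. 0 < s \<and> s \<le> t \<and> t \<le> 1 \<longrightarrow> Xt s \<prec> Xt t"
  proof (intro allI impI)
    fix s t :: real assume st: "0 < s \<and> s \<le> t \<and> t \<le> 1"
    have "lip1 (Xt t) (Xt s) (\<lambda>x. x)"
      unfolding lip1_def Xt_fst Xt_snd
    proof (intro conjI ballI)
      show "(\<lambda>x. x) \<in> space \<mu>1 \<rightarrow> space \<mu>1" by simp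
      fix x x' assume "x \<in> space \<mu>1" "x' \<in> space \<mu>1"
      then have "d0 (f x) (f x') \<le> d1 x x'" using lip by (auto simp: M1_def)
      then have "0 \<le> (t - s) * (d1 x x' - d0 (f x) (f x'))" using st by simp
      moreover have "dt t x x' - dt s x x' = (t - s) * (d1 x x' - d0 (f x) (f x'))"
        by (simp add: dt_def algebra_simps)
      ultimately show "dt s x x' \<le> dt t x x'" by simp
    qed
    then show "Xt s \<prec> Xt t"
      unfolding lip_dominated_def Xt_snd by (intro exI[of _ "\<lambda>x. x"]) simp
  qed
  show ?thesis using P1 P2 P3 P4 P5 P6 by blast
qed

end
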